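(* Let $s,a,\sigma$ be positive integers, let $X$ be a set of cardinality $s$, and let $\pi_1,\ldots,\pi_\sigma$ be partitions of $X$ such that every part of every $\pi_i$ has cardinality at least $a$. Then there exists a subset $Y\subseteq X$ with $|Y|\ge s(1-1/a)^\sigma$ such that $Y$ contains no part of $\pi_i$ for any $i\in\{1,\ldots,\sigma\}$. *)

theory Defs
  imports Complex_Main "HOL-Library.Disjoint_Sets"
begin

end

theory Submission
  imports Defs
begin

lemma one_step:
  fixes Y X :: "'a set" and QQ :: "'a set set" and a :: nat
  assumes "a > 0" "finite X" "Y \<subseteq> X" "partition_on X QQ"
    and "\<And>P. P \<in> QQ \<Longrightarrow> card P \<ge> a"
  shows "\<exists>Z. Z \<subseteq> Y \<and> real (card Z) \<ge> real (card Y) * (1 - 1 / real a)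
           \<and> (\<forall>P \<in> QQ. \<not> P \<subseteq> Z)"
proof -
  define B where "B = {P \<in> QQ. P \<subseteq> Y}"
  define f where "f P = (SOME x. x \<in> P)" for P :: "'a set"
  have fY: "Y \<subseteq> X" "finite Y" using assms finite_subset by auto
  have PiX: "QQ \<subseteq> Pow X" using assms(4) unfolding partition_on_def by auto
  have finB: "finite B" using PiX assms(2) unfolding B_def
    by (metis (no_types, lifting) finite_Pow_iff finite_subset mem_Collect_eq subsetI)
  have ne: "\<And>P. P \<in> QQ \<Longrightarrow> P \<noteq> {}" using assms(4) unfolding partition_on_def by auto
  have fP: "\<And>P. P \<in> QQ \<Longrightarrow> f P \<in> P" unfolding f_def using ne by (simp add: some_in_eq)
  have disj: "disjoint B" using assms(4) unfolding partition_on_def B_def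
    by (auto intro: pairwise_subset)
  have finP: "\<And>P. P \<in> B \<Longrightarrow> finite P" using fY unfolding B_def by (auto intro: finite_subset)
  have "card (\<Union>B) = sum card B"
    using card_Union_disjoint[OF disj] finP by auto
  moreover have "sum card B \<ge> card B * a"
    using sum_bounded_below[of B a card] assms(5) unfolding B_def by auto
  moreover have "card (\<Union>B) \<le> card Y"
    using fY unfolding B_def by (intro card_mono) auto
  ultimately have cB: "card B * a \<le> card Y" by linarith
  define Z where "Z = Y - f ` B"
  have fBY: "f ` B \<subseteq> Y" using fP unfolding B_def by auto
  have "card Z = card Y - card (f ` B)" unfolding Z_def
    using card_Diff_subset[OF finite_imageI[OF finB] fBY] .
  moreover have "card (f ` B) \<le> card B" using card_image_le finB by blast
  moreover have "card (f ` B) \<le> card Y" using card_mono[OF fY(2) fBY] .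
  ultimately have "real (card Z) \<ge> real (card Y) - real (card B)" by simp
  moreover have "real (card B) \<le> real (card Y) / real a"
    using cB assms(1) by (simp add: field_simps flip: of_nat_mult)
  ultimately have "real (card Z) \<ge> real (card Y) * (1 - 1 / real a)"
    by (simp add: algebra_simps)
  moreover have "\<forall>P \<in> QQ. \<not> P \<subseteq> Z"
  proof
    fix P assume P: "P \<in> QQ"
    show "\<not> P \<subseteq> Z"
    proof (cases "P \<subseteq> Y")
      case True
      then have "P \<in> B" using P unfolding B_def by auto
      then have "f P \<notin> Z" unfolding Z_def by auto
      then show ?thesis using fP[OF P] by auto
    next
      case False then show ?thesis unfolding Z_def by auto
    qed
  qed
  ultimately show ?thesis unfolding Z_def by blast
qed

lemma iter:
  fixes X :: "'a set" and a :: nat and \<pi> :: "nat \<Rightarrow> 'a set set"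
  assumes "a > 0" "finite X"
    and "\<And>i. i \<in> {1..n} \<Longrightarrow> partition_on X (\<pi> i)"
    and "\<And>i P. i \<in> {1..n} \<Longrightarrow> P \<in> \<pi> i \<Longrightarrow> card P \<ge> a"
  shows "\<exists>Y. Y \<subseteq> X \<and> real (card Y) \<ge> real (card X) * (1 - 1 / real a) ^ n
           \<and> (\<forall>i \<in> {1..n}. \<forall>P \<in> \<pi> i. \<not> P \<subseteq> Y)"
  using assms(3,4)
proof (induction n)
  case 0
  then show ?case by auto
next
  case (Suc n)
  have "\<exists>Y. Y \<subseteq> X \<and> real (card Y) \<ge> real (card X) * (1 - 1 / real a) ^ n
           \<and> (\<forall>i \<in> {1..n}. \<forall>P \<in> \<pi> i. \<not> P \<subseteq> Y)"
    using Suc.prems by (intro Suc.IH) (auto, meson le_SucI)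
  then obtain Y where Y: "Y \<subseteq> X" "real (card Y) \<ge> real (card X) * (1 - 1 / real a) ^ n"
    "\<forall>i \<in> {1..n}. \<forall>P \<in> \<pi> i. \<not> P \<subseteq> Y" by auto
  obtain Z where Z: "Z \<subseteq> Y" "real (card Z) \<ge> real (card Y) * (1 - 1 / real a)"
    "\<forall>P \<in> \<pi> (Suc n). \<not> P \<subseteq> Z"
    using one_step[OF assms(1,2) Y(1), of "\<pi> (Suc n)"] Suc.prems(1)[of "Suc n"] Suc.prems(2)[of "Suc n"] by auto
  have c: "0 \<le> 1 - 1 / real a" using assms(1) by (simp add: field_simps)
  have "real (card X) * (1 - 1 / real a) ^ Suc n \<le> real (card Y) * (1 - 1 / real a)"
    using mult_right_mono[OF Y(2) c] by (simp add: algebra_simps)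
  moreover have "\<forall>i \<in> {1..Suc n}. \<forall>P \<in> \<pi> i. \<not> P \<subseteq> Z"
    using Y(3) Z(1,3) by (auto simp: le_Suc_eq) (meson atLeastAtMost_iff Suc_leI le_less subset_trans zero_less_iff_neq_zero le_refl)
  ultimately show ?case using Z Y(1) by (meson order_trans)
qed

theorem lemma2p7:
  fixes X :: "'a set" and s a \<sigma> :: nat and \<pi> :: "nat \<Rightarrow> 'a set set"
  assumes "s > 0" and "a > 0" and "\<sigma> > 0"
    and "finite X" and "card X = s"
    and "\<And>i. i \<in> {1..\<sigma>} \<Longrightarrow> partition_on X (\<pi> i)"
    and "\<And>i P. i \<in> {1..\<sigma>} \<Longrightarrow> P \<in> \<pi> i \<Longrightarrow> card P \<ge> a"
  shows "\<exists>Y. Y \<subseteq> X \<and> real (card Y) \<ge> real s * (1 - 1 / real a) ^ \<sigma>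
           \<and> (\<forall>i \<in> {1..\<sigma>}. \<forall>P \<in> \<pi> i. \<not> P \<subseteq> Y)"
  using iter[OF assms(2,4), of \<sigma> \<pi>] assms(5,6,7) by auto

end
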